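(* Let $\Sigma\in\mathbb{R}^{d\times d}$ be symmetric positive definite, $m_0,m_\pi\in\mathbb{R}^d$, $\mu_0=\mathcal{N}(m_0,\Sigma)$, $\pi=\mathcal{N}(m_\pi,\Sigma)$, $\mathcal{F}(\mu)=\mathrm{KL}(\mu|\pi)$, $w_0>0$, $L>0$, and let $(\varphi_t,\mu_t)_{t\ge1}$ be produced by Coin Wasserstein Gradient Descent. Then for every $t\ge1$ there is $m_t\in\mathbb{R}^d$ (with $m_1=m_0$) such that $\mu_t=\mathcal{N}(m_t,\Sigma)$ and $\varphi_t(x)=m_t+(x-m_0)$ for all $x\in\mathbb{R}^d$; in particular $\varphi_t$ is the optimal transport map from $\mu_0$ to $\mu_t$, and $t_{\mu_t}^\pi\circ\varphi_t=t_{\mu_0}^\pi$, where $t_\mu^\nu$ denotes the optimal transport map from $\mu$ to $\nu$.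
   Context: For $\mathcal{F}(\mu)=\mathrm{KL}(\mu|\pi)$ the Wasserstein gradient is $\nabla_{W_2}\mathcal{F}(\mu)=\nabla\log\mu-\nabla\log\pi$ (densities). Coin Wasserstein Gradient Descent (Algorithm 1): set $\varphi_1=\mathrm{id}$, $\mu_1=\mu_0$; for $t\ge2$, with $g_s(x):=\nabla_{W_2}\mathcal{F}(\mu_s)(\varphi_s(x))$, $$\varphi_t(x)=x-\frac{\sum_{s=1}^{t-1}g_s(x)}{Lt}\Big(w_0-\sum_{s=1}^{t-1}\Big\langle\frac1L g_s(x),\varphi_s(x)-x\Big\rangle\Big),\qquad\mu_t=(\varphi_t)_\#\mu_0.$$ *)

theory Defs
  imports "HOL-Analysis.Analysis"
begin

definition sym_pos_def_matrix :: "real^'n^'n \<Rightarrow> bool" where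
  "sym_pos_def_matrix S \<longleftrightarrow> transpose S = S \<and> (\<forall>x. x \<noteq> 0 \<longrightarrow> x \<bullet> (S *v x) > 0)"

definition gauss_pdf :: "real^'n \<Rightarrow> real^'n^'n \<Rightarrow> real^'n \<Rightarrow> real" where
  "gauss_pdf m S x =
     (2 * pi) powr (- real CARD('n) / 2) * (det S) powr (- 1 / 2)
     * exp (- (1/2) * ((x - m) \<bullet> (matrix_inv S *v (x - m))))"

definition gaussian :: "real^'n \<Rightarrow> real^'n^'n \<Rightarrow> (real^'n) measure" where
  "gaussian m S = density lborel (\<lambda>x. ennreal (gauss_pdf m S x))"

definition log_density_grad :: "(real^'n) measure \<Rightarrow> (real^'n \<Rightarrow> real^'n) \<Rightarrow> bool" where
  "log_density_grad \<mu> g \<longleftrightarrow>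
     (\<exists>p. (\<forall>x. p x > 0) \<and> \<mu> = density lborel (\<lambda>x. ennreal (p x)) \<and>
          (\<forall>x. ((\<lambda>y. ln (p y)) has_derivative (\<lambda>h. g x \<bullet> h)) (at x)))"

definition wgrad_KL :: "(real^'n) measure \<Rightarrow> (real^'n) measure \<Rightarrow> (real^'n \<Rightarrow> real^'n) \<Rightarrow> bool" where
  "wgrad_KL \<mu> \<pi> G \<longleftrightarrow>
     (\<exists>g\<mu> g\<pi>. log_density_grad \<mu> g\<mu> \<and> log_density_grad \<pi> g\<pi> \<and> G = (\<lambda>x. g\<mu> x - g\<pi> x))"

text \<open>(phi, mu) is a run of Coin Wasserstein Gradient Descent (Algorithm 1) for F = KL(.|pi),
  started at mu0, with parameters w0 and L; indices t >= 1 (values at t = 0 are irrelevant).\<close>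
definition coin_wgd ::
  "(real^'n) measure \<Rightarrow> (real^'n) measure \<Rightarrow> real \<Rightarrow> real
    \<Rightarrow> (nat \<Rightarrow> real^'n \<Rightarrow> real^'n) \<Rightarrow> (nat \<Rightarrow> (real^'n) measure) \<Rightarrow> bool" where
  "coin_wgd \<mu>0 \<pi> w0 L \<phi> \<mu> \<longleftrightarrow>
     (\<exists>G :: nat \<Rightarrow> real^'n \<Rightarrow> real^'n.
        \<phi> 1 = id \<and> \<mu> 1 = \<mu>0 \<and>
        (\<forall>t\<ge>1. \<phi> t \<in> borel_measurable lborel \<and> \<mu> t = distr \<mu>0 lborel (\<phi> t)) \<and>
        (\<forall>t\<ge>1. wgrad_KL (\<mu> t) \<pi> (G t)) \<and>
        (\<forall>t\<ge>2. \<forall>x. \<phi> t x =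
            x - ((w0 - (\<Sum>s\<in>{1..t-1}. ((1/L) *\<^sub>R G s (\<phi> s x)) \<bullet> (\<phi> s x - x))) / (L * real t))
                  *\<^sub>R (\<Sum>s\<in>{1..t-1}. G s (\<phi> s x))))"

definition transport_cost :: "(real^'n) measure \<Rightarrow> (real^'n \<Rightarrow> real^'n) \<Rightarrow> ennreal" where
  "transport_cost \<mu> T = (\<integral>\<^sup>+ x. ennreal ((norm (x - T x))\<^sup>2) \<partial>\<mu>)"

definition is_ot_map :: "(real^'n) measure \<Rightarrow> (real^'n) measure \<Rightarrow> (real^'n \<Rightarrow> real^'n) \<Rightarrow> bool" where
  "is_ot_map \<mu> \<nu> T \<longleftrightarrow>
     T \<in> borel_measurable \<mu> \<and> distr \<mu> lborel T = \<nu> \<and>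
     (\<forall>S. S \<in> borel_measurable \<mu> \<and> distr \<mu> lborel S = \<nu> \<longrightarrow> transport_cost \<mu> T \<le> transport_cost \<mu> S)"

end

theory Submission
  imports Defs "HOL-Probability.Distributions"
begin

lemma spd_inj:
  fixes S :: "real^'n^'n"
  assumes "sym_pos_def_matrix S"
  shows "inj ((*v) S)"
proof (rule injI)
  fix x y assume "S *v x = S *v y"
  hence "S *v (x - y) = 0" by (simp add: matrix_vector_mult_diff_distrib)
  hence "(x - y) \<bullet> (S *v (x - y)) = 0" by simp
  thus "x = y" using assms unfolding sym_pos_def_matrix_def by (metis eq_iff_diff_eq_0 less_irrefl)
qed

lemma spd_invertible:
  fixes S :: "real^'n^'n"
  assumes "sym_pos_def_matrix S"
  shows "invertible S"
proof -
  have "det (matrix ((*v) S)) \<noteq> 0"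
    using det_nz_iff_inj[OF matrix_vector_mul_linear] spd_inj[OF assms] by blast
  thus ?thesis by (simp add: invertible_det_nz)
qed

lemma spd_inv:
  fixes S :: "real^'n^'n"
  assumes "sym_pos_def_matrix S"
  shows "S ** matrix_inv S = mat 1 \<and> matrix_inv S ** S = mat 1"
  using spd_invertible[OF assms] unfolding invertible_def matrix_inv_def
  by (rule someI_ex)

lemma spd_inv_pos:
  fixes S :: "real^'n^'n"
  assumes "sym_pos_def_matrix S" "x \<noteq> 0"
  shows "x \<bullet> (matrix_inv S *v x) > 0"
proof -
  define y where "y = matrix_inv S *v x"
  have xy: "x = S *v y" unfolding y_def
    by (simp add: matrix_vector_mul_assoc spd_inv[OF assms(1)])
  have "y \<noteq> 0" using xy assms(2) by auto
  hence "y \<bullet> (S *v y) > 0" using assms(1) unfolding sym_pos_def_matrix_def by blast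
  moreover have "x \<bullet> (matrix_inv S *v x) = (S *v y) \<bullet> y" using xy y_def by simp
  ultimately show ?thesis by (simp add: inner_commute)
qed

lemma spd_det:
  fixes S :: "real^'n^'n"
  assumes "sym_pos_def_matrix S"
  shows "det S \<noteq> 0"
  using spd_invertible[OF assms] invertible_det_nz by blast

lemma gauss_pdf_pos:
  fixes S :: "real^'n^'n"
  assumes "det S \<noteq> 0"
  shows "gauss_pdf m S x > 0"
  using assms unfolding gauss_pdf_def by simp

lemma quad_lower:
  fixes A :: "real^'n^'n"
  assumes pos: "\<And>x. x \<noteq> 0 \<Longrightarrow> x \<bullet> (A *v x) > 0"
  shows "\<exists>c>0. \<forall>x. c * (norm x)^2 \<le> x \<bullet> (A *v x)"
proof -
  let ?f = "\<lambda>x. x \<bullet> (A *v x)"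
  have cont: "continuous_on (sphere 0 1) ?f"
    by (intro continuous_intros linear_continuous_on matrix_vector_mul_bounded_linear)
  obtain u :: "real^'n" where "norm u = 1"
    using vector_choose_size[of 1] by auto
  hence ne: "sphere (0::real^'n) 1 \<noteq> {}" by auto
  obtain x0 where x0: "x0 \<in> sphere 0 1" "\<And>y. y \<in> sphere 0 1 \<Longrightarrow> ?f x0 \<le> ?f y"
    using continuous_attains_inf[OF compact_sphere ne cont] by blast
  have c: "?f x0 > 0" using x0(1) pos by (intro pos) auto
  have "?f x0 * (norm x)^2 \<le> ?f x" for x
  proof (cases "x = 0")
    case True thus ?thesis by simp
  next
    case False
    define u where "u = (1 / norm x) *\<^sub>R x"
    have u: "u \<in> sphere 0 1" using False by (simp add: u_def)
    have xu: "x = norm x *\<^sub>R u" using False by (simp add: u_def)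
    have "?f x = (norm x)^2 * ?f u"
      by (subst xu, subst xu) (simp add: matrix_vector_mult_scaleR power2_eq_square)
    thus ?thesis using x0(2)[OF u] by (simp add: mult_right_mono mult.commute)
  qed
  thus ?thesis using c by blast
qed

lemma inner_matrix_transpose:
  fixes A :: "real^'n^'n"
  shows "x \<bullet> (A *v y) = (transpose A *v x) \<bullet> y"
  unfolding inner_vec_def matrix_vector_mult_def transpose_def
  apply (simp add: sum_distrib_left sum_distrib_right)
  apply (subst sum.swap)
  apply (simp add: mult_ac)
  done

definition gpdf_grad :: "real^'n^'n \<Rightarrow> real^'n \<Rightarrow> real^'n \<Rightarrow> real^'n" where
  "gpdf_grad S m x = -((1/2) *\<^sub>R ((matrix_inv S *v (x - m)) + (transpose (matrix_inv S) *v (x - m))))"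

lemma ln_gauss_pdf:
  fixes S :: "real^'n^'n"
  assumes "det S \<noteq> 0"
  shows "ln (gauss_pdf m S y) = ln ((2 * pi) powr (- real CARD('n) / 2) * (det S) powr (- 1 / 2))
     - (1/2) * ((y - m) \<bullet> (matrix_inv S *v (y - m)))"
  using assms unfolding gauss_pdf_def by (simp add: ln_mult)

lemma gauss_ln_deriv:
  fixes S :: "real^'n^'n"
  assumes "det S \<noteq> 0"
  shows "((\<lambda>y. ln (gauss_pdf m S y)) has_derivative (\<lambda>h. gpdf_grad S m x \<bullet> h)) (at x)"
proof -
  let ?A = "matrix_inv S"
  have lin: "bounded_linear ((*v) ?A)" by (rule matrix_vector_mul_bounded_linear)
  have dA: "((\<lambda>y. ?A *v (y - m)) has_derivative (\<lambda>h. ?A *v h)) (at x)"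
    by (rule has_derivative_eq_rhs[OF bounded_linear.has_derivative[OF lin, OF has_derivative_diff[OF has_derivative_ident has_derivative_const]]]) simp
  have "((\<lambda>y. ln ((2 * pi) powr (- real CARD('n) / 2) * (det S) powr (- 1 / 2))
     - (1/2) * ((y - m) \<bullet> (?A *v (y - m)))) has_derivative
     (\<lambda>h. 0 - (1/2) * (h \<bullet> (?A *v (x - m)) + (x - m) \<bullet> (?A *v h)))) (at x)"
    by (intro derivative_eq_intros) (auto intro: dA)
  moreover have "(\<lambda>h. 0 - (1/2) * (h \<bullet> (?A *v (x - m)) + (x - m) \<bullet> (?A *v h))) = (\<lambda>h. gpdf_grad S m x \<bullet> h)"
  proof
    fix h
    have "(x - m) \<bullet> (?A *v h) = (transpose ?A *v (x-m)) \<bullet> h" by (rule inner_matrix_transpose)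
    thus "0 - (1/2) * (h \<bullet> (?A *v (x - m)) + (x - m) \<bullet> (?A *v h)) = gpdf_grad S m x \<bullet> h"
      unfolding gpdf_grad_def
      by (simp add: inner_add_left inner_add_right inner_commute distrib_right del: transpose_matrix_vector)
  qed
  ultimately show ?thesis using ln_gauss_pdf[OF assms] by simp
qed

lemma gauss_log_density_grad:
  fixes S :: "real^'n^'n"
  assumes "det S \<noteq> 0"
  shows "log_density_grad (gaussian m S) (gpdf_grad S m)"
  unfolding log_density_grad_def gaussian_def
  using gauss_pdf_pos[OF assms] gauss_ln_deriv[OF assms] by blast

lemma cont_ae_eq:
  fixes p q :: "'a::euclidean_space \<Rightarrow> real"
  assumes "continuous_on UNIV p" "continuous_on UNIV q" "AE x in lborel. p x = q x"
  shows "p = q"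
proof (rule ccontr)
  assume "p \<noteq> q"
  then obtain x0 where x0: "p x0 \<noteq> q x0" by auto
  let ?U = "{x. p x \<noteq> q x}"
  have "open ?U"
    using open_Collect_neq[OF assms(1,2)] .
  then obtain a b where ab: "box a b \<subseteq> ?U" "x0 \<in> box a b" "\<forall>i\<in>Basis. a \<bullet> i < b \<bullet> i"
    using open_contains_box[OF \<open>open ?U\<close>, of x0] x0 by blast
  obtain N where N0: "{x \<in> space lborel. \<not> p x = q x} \<subseteq> N" "emeasure lborel N = 0" "N \<in> sets lborel"
    using assms(3) by (rule AE_E)
  hence N: "N \<in> null_sets lborel" "{x \<in> space lborel. \<not> p x = q x} \<subseteq> N" by auto
  have "box a b \<subseteq> N" using ab(1) N(2) by auto
  hence "emeasure lborel (box a b) \<le> emeasure lborel N" by (intro emeasure_mono) (use N in auto)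
  also have "\<dots> = 0" using N by auto
  finally have "emeasure lborel (box a b) = 0" by simp
  moreover have "emeasure lborel (box a b) > 0"
    using ab(3) by (simp add: less_imp_le prod_pos inner_diff_left)
  ultimately show False by simp
qed

lemma ldg_unique:
  fixes \<mu> :: "(real^'n) measure"
  assumes "log_density_grad \<mu> g1" "log_density_grad \<mu> g2"
  shows "g1 = g2"
proof -
  obtain p1 where p1: "\<forall>x. p1 x > 0" "\<mu> = density lborel (\<lambda>x. ennreal (p1 x))"
       "\<forall>x. ((\<lambda>y. ln (p1 y)) has_derivative (\<lambda>h. g1 x \<bullet> h)) (at x)"
    using assms(1) unfolding log_density_grad_def by blast
  obtain p2 where p2: "\<forall>x. p2 x > 0" "\<mu> = density lborel (\<lambda>x. ennreal (p2 x))"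
       "\<forall>x. ((\<lambda>y. ln (p2 y)) has_derivative (\<lambda>h. g2 x \<bullet> h)) (at x)"
    using assms(2) unfolding log_density_grad_def by blast
  have cont: "continuous_on UNIV p" if "\<forall>x. p x > 0"
     "\<forall>x. ((\<lambda>y. ln (p y)) has_derivative (\<lambda>h. g x \<bullet> h)) (at x)" for p :: "real^'n \<Rightarrow> real" and g
  proof -
    have "continuous_on UNIV (\<lambda>x. exp (ln (p x)))"
    proof (intro continuous_on_exp continuous_at_imp_continuous_on ballI)
      fix x show "isCont (\<lambda>x. ln (p x)) x" using that(2) has_derivative_continuous by blast
    qed
    thus ?thesis using that(1) by simp
  qed
  have c1: "continuous_on UNIV p1" using cont p1 by blast
  have c2: "continuous_on UNIV p2" using cont p2 by blast
  have m1: "(\<lambda>x. ennreal (p1 x)) \<in> borel_measurable lborel"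
    using borel_measurable_continuous_onI[OF c1] by simp
  have m2: "(\<lambda>x. ennreal (p2 x)) \<in> borel_measurable lborel"
    using borel_measurable_continuous_onI[OF c2] by simp
  have "AE x in lborel. ennreal (p1 x) = ennreal (p2 x)"
    using sigma_finite_measure.density_unique_iff[OF sigma_finite_lborel m1 m2] p1(2) p2(2) by simp
  hence "AE x in lborel. p1 x = p2 x"
    by eventually_elim (use p1(1) p2(1) in \<open>auto simp: less_imp_le\<close>)
  hence eq: "p1 = p2" using cont_ae_eq[OF c1 c2] by blast
  show ?thesis
  proof
    fix x
    have "(\<lambda>h. g1 x \<bullet> h) = (\<lambda>h. g2 x \<bullet> h)"
      using has_derivative_unique p1(3) p2(3) eq by metis
    hence "g1 x \<bullet> (g1 x - g2 x) = g2 x \<bullet> (g1 x - g2 x)" by metis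
    hence "(g1 x - g2 x) \<bullet> (g1 x - g2 x) = 0" by (simp add: inner_diff_left)
    thus "g1 x = g2 x" by simp
  qed
qed

lemma gauss_wgrad:
  fixes S :: "real^'n^'n"
  assumes "det S \<noteq> 0" "wgrad_KL (gaussian m S) (gaussian m' S) G"
  shows "G x = G y"
proof -
  obtain g1 g2 where g: "log_density_grad (gaussian m S) g1" "log_density_grad (gaussian m' S) g2"
      "G = (\<lambda>x. g1 x - g2 x)"
    using assms(2) unfolding wgrad_KL_def by blast
  have "g1 = gpdf_grad S m" using ldg_unique[OF g(1) gauss_log_density_grad[OF assms(1)]] .
  moreover have "g2 = gpdf_grad S m'" using ldg_unique[OF g(2) gauss_log_density_grad[OF assms(1)]] .
  ultimately show ?thesis using g(3)
    by (simp add: gpdf_grad_def matrix_vector_mult_diff_distrib algebra_simps)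
qed

lemma nn_integral_shift:
  fixes g :: "'a::euclidean_space \<Rightarrow> ennreal"
  assumes [measurable]: "g \<in> borel_measurable borel"
  shows "(\<integral>\<^sup>+x. g (x + v) \<partial>lborel) = integral\<^sup>N lborel g"
proof -
  have "integral\<^sup>N lborel g = integral\<^sup>N (distr lborel borel ((+) v)) g"
    by (simp add: lborel_distr_plus)
  also have "\<dots> = (\<integral>\<^sup>+x. g (v + x) \<partial>lborel)"
    by (rule nn_integral_distr) auto
  finally show ?thesis by (simp add: add.commute)
qed

lemma gauss_pdf_cont: "continuous_on UNIV (gauss_pdf m S)"
proof -
  have c1: "continuous_on UNIV ((*v) (matrix_inv S))"
    by (rule linear_continuous_on[OF matrix_vector_mul_bounded_linear])
  have c2: "continuous_on UNIV (\<lambda>x. x - m)" by (intro continuous_on_diff continuous_on_id continuous_on_const)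
  have c3: "continuous_on UNIV (\<lambda>x. matrix_inv S *v (x - m))"
    using continuous_on_compose[OF c2, of "(*v) (matrix_inv S)"] c1 by (simp add: o_def)
  have "continuous_on UNIV (\<lambda>x. (x - m) \<bullet> (matrix_inv S *v (x - m)))"
    by (rule continuous_on_inner[OF c2 c3])
  hence "continuous_on UNIV (\<lambda>x. exp (- (1/2) * ((x - m) \<bullet> (matrix_inv S *v (x - m)))))"
    by (intro continuous_on_exp continuous_on_mult_left)
  hence "continuous_on UNIV (\<lambda>x. (2 * pi) powr (- real CARD('n) / 2) * (det S) powr (- 1 / 2)
     * exp (- (1/2) * ((x - m) \<bullet> (matrix_inv S *v (x - m)))))"
    by (intro continuous_on_mult_left)
  thus ?thesis unfolding gauss_pdf_def[abs_def] .
qed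

lemma gauss_pdf_meas[measurable]: "gauss_pdf m S \<in> borel_measurable borel"
  by (rule borel_measurable_continuous_onI[OF gauss_pdf_cont])

lemma sets_gaussian[simp]: "sets (gaussian m S) = sets borel"
  unfolding gaussian_def by simp

lemma space_gaussian[simp]: "space (gaussian m S) = UNIV"
  unfolding gaussian_def by simp

lemma measurable_gaussian[simp]: "measurable (gaussian m S) N = measurable borel N"
  by (rule measurable_cong_sets) auto

lemma meas_plus[measurable]: "(\<lambda>x::'a::euclidean_space. x + v) \<in> borel_measurable borel"
  by (intro borel_measurable_continuous_onI continuous_intros)

lemma gaussian_shift:
  "distr (gaussian m S) lborel (\<lambda>x. x + v) = gaussian (m + v) S"
proof (rule measure_eqI)
  show "sets (distr (gaussian m S) lborel (\<lambda>x. x + v)) = sets (gaussian (m + v) S)" by simp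
next
  fix A assume A: "A \<in> sets (distr (gaussian m S) lborel (\<lambda>x. x + v))"
  hence Ab[measurable]: "A \<in> sets borel" by simp
  have pre: "(\<lambda>x. x + v) -` A \<in> sets borel" using measurable_sets[OF meas_plus Ab] by simp
  have "emeasure (distr (gaussian m S) lborel (\<lambda>x. x + v)) A
      = emeasure (gaussian m S) ((\<lambda>x. x + v) -` A)"
    by (subst emeasure_distr) (auto simp: pre)
  also have "\<dots> = (\<integral>\<^sup>+x. ennreal (gauss_pdf m S x) * indicator ((\<lambda>x. x + v) -` A) x \<partial>lborel)"
    unfolding gaussian_def by (subst emeasure_density) (auto simp: pre)
  also have "\<dots> = (\<integral>\<^sup>+x. ennreal (gauss_pdf (m + v) S (x + v)) * indicator A (x + v) \<partial>lborel)"
    by (intro nn_integral_cong) (simp add: gauss_pdf_def indicator_def algebra_simps)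
  also have "\<dots> = (\<integral>\<^sup>+x. ennreal (gauss_pdf (m + v) S x) * indicator A x \<partial>lborel)"
    by (rule nn_integral_shift[where g = "\<lambda>x. ennreal (gauss_pdf (m + v) S x) * indicator A x"]) simp
  also have "\<dots> = emeasure (gaussian (m + v) S) A"
    unfolding gaussian_def by (subst emeasure_density) auto
  finally show "emeasure (distr (gaussian m S) lborel (\<lambda>x. x + v)) A = emeasure (gaussian (m + v) S) A" .
qed

lemma one_plus_sum_le_prod:
  fixes f :: "'b \<Rightarrow> real"
  assumes "finite I" "\<And>i. i \<in> I \<Longrightarrow> 0 \<le> f i"
  shows "1 + sum f I \<le> (\<Prod>i\<in>I. 1 + f i)"
  using assms
proof (induction I rule: finite_induct)
  case empty thus ?case by simp
next
  case (insert i I)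
  have fi: "0 \<le> f i" using insert by auto
  have IH: "1 + sum f I \<le> (\<Prod>i\<in>I. 1 + f i)" using insert by auto
  have S: "0 \<le> sum f I" using insert by (auto intro: sum_nonneg)
  have "1 + sum f (insert i I) = 1 + f i + sum f I" using insert by simp
  also have "\<dots> \<le> (1 + f i) * (1 + sum f I)" using fi S by (simp add: algebra_simps)
  also have "\<dots> \<le> (1 + f i) * (\<Prod>i\<in>I. 1 + f i)" using IH fi by (intro mult_left_mono) auto
  finally show ?case using insert by simp
qed

lemma prod_ennreal_less_top:
  fixes f :: "'b \<Rightarrow> ennreal"
  assumes "finite I" "\<And>i. i \<in> I \<Longrightarrow> f i < \<infinity>"
  shows "prod f I < \<infinity>"
  using assms by (induction I rule: finite_induct) (auto simp: ennreal_mult_less_top)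

lemma gauss1d_fin:
  fixes a :: real
  assumes "a > 0"
  shows "(\<integral>\<^sup>+t. ennreal (exp (- a * t^2) * (1 + \<bar>t\<bar>)) \<partial>lborel) < \<infinity>"
proof -
  define \<sigma> where "\<sigma> = sqrt (1 / (2 * a))"
  have \<sigma>pos: "\<sigma> > 0" using assms by (simp add: \<sigma>_def)
  have nd: "exp (- a * t^2) = sqrt (pi / a) * normal_density 0 \<sigma> t" for t
  proof -
    have s2: "\<sigma>^2 = 1 / (2 * a)" using assms by (simp add: \<sigma>_def)
    have p: "2 * pi * \<sigma>^2 = pi / a" using assms by (simp add: s2)
    have e: "-((t - 0)^2) / (2 * \<sigma>^2) = - a * t^2" using assms by (simp add: s2)
    have "normal_density 0 \<sigma> t = 1 / sqrt (pi / a) * exp (- a * t^2)"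
      unfolding normal_density_def p e[symmetric] by simp
    thus ?thesis using assms by simp
  qed
  have i1: "integrable lborel (\<lambda>t. sqrt (pi / a) * (normal_density 0 \<sigma> t + normal_density 0 \<sigma> t * \<bar>t - 0\<bar>^1))"
    using \<sigma>pos by (rule_tac integrable_mult_right) (rule Bochner_Integration.integrable_add[OF integrable_normal_density integrable_normal_moment_abs])
  have eq: "(\<lambda>t. exp (- a * t^2) * (1 + \<bar>t\<bar>)) = (\<lambda>t. sqrt (pi / a) * (normal_density 0 \<sigma> t + normal_density 0 \<sigma> t * \<bar>t - 0\<bar>^1))"
    by (rule ext) (subst nd, simp add: algebra_simps)
  have int: "integrable lborel (\<lambda>t. exp (- a * t^2) * (1 + \<bar>t\<bar>))" unfolding eq by (rule i1)
  hence "(\<integral>\<^sup>+t. ennreal (norm (exp (- a * t^2) * (1 + \<bar>t\<bar>))) \<partial>lborel) < \<infinity>"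
    using int integrable_iff_bounded[of lborel "\<lambda>t. exp (- a * t^2) * (1 + \<bar>t\<bar>)"] by blast
  moreover have "\<And>t. norm (exp (- a * t^2) * (1 + \<bar>t\<bar>)) = exp (- a * t^2) * (1 + \<bar>t\<bar>)"
    by (simp add: abs_mult)
  ultimately show ?thesis by (simp only:)
qed

lemma gauss_fin:
  fixes a :: real
  assumes "a > 0"
  shows "(\<integral>\<^sup>+x. ennreal (exp (- a * (norm (x::'a::euclidean_space))^2) * (1 + norm x)) \<partial>lborel) < \<infinity>"
proof -
  let ?f = "\<lambda>t. exp (- a * t^2) * (1 + \<bar>t\<bar>)"
  have le: "ennreal (exp (- a * (norm x)^2) * (1 + norm x)) \<le> (\<Prod>b\<in>Basis. ennreal (?f (x \<bullet> b)))" for x :: 'a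
  proof -
    have "(norm x)^2 = (\<Sum>b\<in>Basis. (x \<bullet> b)^2)"
      by (subst power2_norm_eq_inner) (simp add: euclidean_inner[of x x] power2_eq_square)
    hence e: "exp (- a * (norm x)^2) = (\<Prod>b\<in>Basis. exp (- a * (x \<bullet> b)^2))"
      by (simp add: sum_distrib_left exp_sum)
    have "1 + norm x \<le> 1 + (\<Sum>b\<in>Basis. \<bar>x \<bullet> b\<bar>)" using norm_le_l1[of x] by simp
    also have "\<dots> \<le> (\<Prod>b\<in>Basis. 1 + \<bar>x \<bullet> b\<bar>)" by (rule one_plus_sum_le_prod) auto
    finally have "exp (- a * (norm x)^2) * (1 + norm x) \<le> (\<Prod>b\<in>Basis. exp (- a * (x \<bullet> b)^2)) * (\<Prod>b\<in>Basis. 1 + \<bar>x \<bullet> b\<bar>)"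
      unfolding e by (intro mult_left_mono) (auto intro: prod_nonneg)
    also have "\<dots> = (\<Prod>b\<in>Basis. ?f (x \<bullet> b))" by (simp add: prod.distrib)
    finally have "ennreal (exp (- a * (norm x)^2) * (1 + norm x)) \<le> ennreal (\<Prod>b\<in>Basis. ?f (x \<bullet> b))"
      by (rule ennreal_leI)
    also have "\<dots> = (\<Prod>b\<in>Basis. ennreal (?f (x \<bullet> b)))" by (rule prod_ennreal[symmetric]) auto
    finally show ?thesis .
  qed
  have "(\<integral>\<^sup>+x. ennreal (exp (- a * (norm (x::'a))^2) * (1 + norm x)) \<partial>lborel)
      \<le> (\<integral>\<^sup>+x. (\<Prod>b\<in>Basis. ennreal (?f ((x::'a) \<bullet> b))) \<partial>lborel)"
    by (rule nn_integral_mono) (rule le)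
  also have "\<dots> = (\<Prod>b\<in>(Basis::'a set). (\<integral>\<^sup>+t. ennreal (?f t) \<partial>lborel))"
    by (rule nn_integral_lborel_prod) auto
  also have "\<dots> < \<infinity>"
    using gauss1d_fin[OF assms] by (intro prod_ennreal_less_top) auto
  finally show ?thesis .
qed

lemma gauss_bound:
  fixes S :: "real^'n^'n"
  assumes "sym_pos_def_matrix S"
  shows "\<exists>K c. c > 0 \<and> (\<forall>m x. gauss_pdf m S x \<le> K * exp (- c * (norm (x - m))^2))"
proof -
  obtain c0 where c0: "c0 > 0" "\<And>x. c0 * (norm x)^2 \<le> x \<bullet> (matrix_inv S *v x)"
    using quad_lower[of "matrix_inv S"] spd_inv_pos[OF assms] by blast
  define K where "K = (2 * pi) powr (- real CARD('n) / 2) * (det S) powr (- 1 / 2)"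
  have K: "K \<ge> 0" unfolding K_def by simp
  have "gauss_pdf m S x \<le> K * exp (- (c0/2) * (norm (x - m))^2)" for m x
  proof -
    have "gauss_pdf m S x = K * exp (- (1/2) * ((x - m) \<bullet> (matrix_inv S *v (x - m))))"
      unfolding gauss_pdf_def K_def by simp
    also have "\<dots> \<le> K * exp (- (c0/2) * (norm (x - m))^2)"
      using c0(2)[of "x - m"] K by (intro mult_left_mono) auto
    finally show ?thesis .
  qed
  thus ?thesis using c0(1) by (intro exI[of _ K] exI[of _ "c0/2"]) auto
qed

lemma gauss_nn_fin:
  fixes S :: "real^'n^'n"
  assumes "sym_pos_def_matrix S"
  shows "(\<integral>\<^sup>+x. ennreal (gauss_pdf m S x * (1 + norm x)) \<partial>lborel) < \<infinity>"
proof -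
  obtain K c where Kc: "c > 0" "\<And>m x. gauss_pdf m S x \<le> K * exp (- c * (norm (x - m))^2)"
    using gauss_bound[OF assms] by blast
  have K: "K \<ge> 0" using Kc(2)[of m m] gauss_pdf_pos[OF spd_det[OF assms], of m m]
    by (smt (verit) exp_gt_zero mult_nonpos_nonneg)
  let ?g = "\<lambda>y::real^'n. ennreal (exp (- c * (norm y)^2) * (1 + norm y))"
  have "(\<integral>\<^sup>+x. ennreal (gauss_pdf m S x * (1 + norm x)) \<partial>lborel)
      \<le> (\<integral>\<^sup>+x. ennreal (K * (1 + norm m)) * ?g (x + (- m)) \<partial>lborel)"
  proof (intro nn_integral_mono)
    fix x :: "real^'n"
    have n: "1 + norm x \<le> (1 + norm m) * (1 + norm (x - m))"
    proof -
      have "0 \<le> norm m * norm (x - m)" by simp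
      moreover have "m + (x - m) = x" by simp
      ultimately show ?thesis using norm_triangle_ineq[of m "x - m"]
        by (simp only: ring_distribs mult_1_left mult_1_right)
    qed
    have "gauss_pdf m S x * (1 + norm x) \<le> (K * exp (- c * (norm (x - m))^2)) * ((1 + norm m) * (1 + norm (x - m)))"
      using Kc(2)[of m x] n gauss_pdf_pos[OF spd_det[OF assms], of m x]
      by (intro mult_mono) auto
    thus "ennreal (gauss_pdf m S x * (1 + norm x)) \<le> ennreal (K * (1 + norm m)) * ?g (x + (- m))"
      using K by (simp add: ennreal_mult'[symmetric] mult_ac)
  qed
  also have "\<dots> = ennreal (K * (1 + norm m)) * (\<integral>\<^sup>+x. ?g (x + (- m)) \<partial>lborel)"
    by (rule nn_integral_cmult) simp
  also have "\<dots> = ennreal (K * (1 + norm m)) * (\<integral>\<^sup>+x. ?g x \<partial>lborel)"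
    by (subst nn_integral_shift) auto
  also have "\<dots> < \<infinity>"
    using gauss_fin[OF Kc(1), where 'a = "real^'n"] by (simp add: ennreal_mult_less_top)
  finally show ?thesis .
qed

lemma gaussian_finite:
  fixes S :: "real^'n^'n"
  assumes "sym_pos_def_matrix S"
  shows "finite_measure (gaussian m S)"
proof (rule finite_measureI)
  have "emeasure (gaussian m S) (space (gaussian m S)) = (\<integral>\<^sup>+x. ennreal (gauss_pdf m S x) \<partial>lborel)"
    unfolding gaussian_def by (simp add: emeasure_density)
  also have "\<dots> \<le> (\<integral>\<^sup>+x. ennreal (gauss_pdf m S x * (1 + norm x)) \<partial>lborel)"
    using gauss_pdf_pos[OF spd_det[OF assms]]
    by (intro nn_integral_mono ennreal_leI) (simp add: less_imp_le)
  also have "\<dots> < \<infinity>" by (rule gauss_nn_fin[OF assms])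
  finally show "emeasure (gaussian m S) (space (gaussian m S)) \<noteq> \<infinity>" by simp
qed

lemma gaussian_integrable:
  fixes S :: "real^'n^'n"
  assumes "sym_pos_def_matrix S"
  shows "integrable (gaussian m S) (\<lambda>x. x)"
proof (subst integrable_iff_bounded, intro conjI)
  show "(\<lambda>x. x) \<in> borel_measurable (gaussian m S)" unfolding measurable_gaussian by simp
  have "(\<integral>\<^sup>+x. ennreal (norm x) \<partial>gaussian m S) = (\<integral>\<^sup>+x. ennreal (gauss_pdf m S x) * ennreal (norm x) \<partial>lborel)"
    unfolding gaussian_def by (subst nn_integral_density) auto
  also have "\<dots> \<le> (\<integral>\<^sup>+x. ennreal (gauss_pdf m S x * (1 + norm x)) \<partial>lborel)"
    using gauss_pdf_pos[OF spd_det[OF assms]]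
    by (intro nn_integral_mono) (simp add: ennreal_mult'[symmetric] less_imp_le ennreal_leI mult_left_mono)
  also have "\<dots> < \<infinity>" by (rule gauss_nn_fin[OF assms])
  finally show "(\<integral>\<^sup>+x. ennreal (norm x) \<partial>gaussian m S) < \<infinity>" .
qed

lemma nn_fin_int:
  fixes f :: "'a \<Rightarrow> real"
  assumes "f \<in> borel_measurable M" "\<And>x. 0 \<le> f x"
  shows "(\<integral>\<^sup>+x. ennreal (f x) \<partial>M) < \<infinity> \<longleftrightarrow> integrable M f"
  using assms integrable_iff_bounded[of M f] by simp

lemma nn_int_eq:
  fixes f :: "'a \<Rightarrow> real"
  assumes "integrable M f" "\<And>x. 0 \<le> f x"
  shows "(\<integral>\<^sup>+x. ennreal (f x) \<partial>M) = ennreal (integral\<^sup>L M f)"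
  using assms by (intro nn_integral_eq_integral) auto

lemma norm_add_sq: "(norm (w + v))^2 = (norm w)^2 + 2 * (v \<bullet> w) + (norm (v::'a::real_inner))^2"
  by (simp add: power2_norm_eq_inner inner_add_left inner_add_right inner_commute)

lemma ot_translation:
  fixes S :: "real^'n^'n"
  assumes spd: "sym_pos_def_matrix S"
  shows "is_ot_map (gaussian m0 S) (gaussian (m0 + v) S) (\<lambda>x. x + v)"
proof -
  let ?M = "gaussian m0 S"
  interpret fm: finite_measure ?M by (rule gaussian_finite[OF spd])
  let ?U = "measure ?M UNIV"
  have costT: "transport_cost ?M (\<lambda>x. x + v) = ennreal ((norm v)^2 * ?U)"
  proof -
    have "transport_cost ?M (\<lambda>x. x + v) = (\<integral>\<^sup>+x. ennreal ((norm v)^2) \<partial>?M)"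
      unfolding transport_cost_def by simp
    also have "\<dots> = ennreal ((norm v)^2) * emeasure ?M UNIV" by simp
    also have "\<dots> = ennreal ((norm v)^2 * ?U)"
      using fm.emeasure_eq_measure[of UNIV] by (simp add: ennreal_mult)
    finally show ?thesis .
  qed
  show ?thesis unfolding is_ot_map_def
  proof (intro conjI allI impI)
    show "(\<lambda>x. x + v) \<in> borel_measurable ?M" by simp
    show "distr ?M lborel (\<lambda>x. x + v) = gaussian (m0 + v) S" by (rule gaussian_shift)
  next
    fix S' assume S': "S' \<in> borel_measurable ?M \<and> distr ?M lborel S' = gaussian (m0 + v) S"
    hence S'm[measurable]: "S' \<in> borel_measurable borel" by simp
    have S'l: "S' \<in> measurable ?M lborel" using S'm by simp
    show "transport_cost ?M (\<lambda>x. x + v) \<le> transport_cost ?M S'"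
    proof (cases "transport_cost ?M S' < \<infinity>")
      case False hence "transport_cost ?M S' = top" by (simp add: less_top[symmetric])
      thus ?thesis by simp
    next
      case True
      let ?f = "\<lambda>x. (norm (x - S' x))^2"
      have intf: "integrable ?M ?f"
        using True nn_fin_int[of ?f ?M] unfolding transport_cost_def by simp
      have intid: "integrable ?M (\<lambda>x. x)" by (rule gaussian_integrable[OF spd])
      have dS: "distr ?M lborel S' = gaussian (m0 + v) S" using S' by blast
      have "integrable (distr ?M lborel S') (\<lambda>y. y)"
        unfolding dS by (rule gaussian_integrable[OF spd])
      hence intS: "integrable ?M S'"
        by (subst (asm) integrable_distr_eq[OF S'l]) auto
      have "integral\<^sup>L ?M S' = integral\<^sup>L (distr ?M lborel S') (\<lambda>y. y)"
        by (rule integral_distr[symmetric]) (use S'l in auto)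
      also have "\<dots> = integral\<^sup>L (distr ?M lborel (\<lambda>x. x + v)) (\<lambda>y. y)"
        unfolding dS gaussian_shift ..
      also have "\<dots> = (\<integral>x. x + v \<partial>?M)"
        by (rule integral_distr) auto
      also have "\<dots> = integral\<^sup>L ?M (\<lambda>x. x) + ?U *\<^sub>R v"
        using intid by simp
      finally have meanS: "integral\<^sup>L ?M S' = integral\<^sup>L ?M (\<lambda>x. x) + ?U *\<^sub>R v" .
      have intw: "integrable ?M (\<lambda>x. x - S' x)" using intid intS by simp
      have intr: "integrable ?M (\<lambda>x. - ((norm v)^2) - 2 * (v \<bullet> (x - S' x)))"
        using intw by simp
      have pw: "- ((norm v)^2) - 2 * (v \<bullet> (x - S' x)) \<le> ?f x" for x
        using norm_add_sq[of "x - S' x" v] zero_le_power2[of "norm (x - S' x + v)"] by linarith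
      have "(norm v)^2 * ?U = (\<integral>x. - ((norm v)^2) - 2 * (v \<bullet> (x - S' x)) \<partial>?M)"
      proof -
        have "(\<integral>x. - ((norm v)^2) - 2 * (v \<bullet> (x - S' x)) \<partial>?M)
            = - ((norm v)^2) * ?U - 2 * (v \<bullet> (integral\<^sup>L ?M (\<lambda>x. x) - integral\<^sup>L ?M S'))"
          using intw intid intS by (simp add: Bochner_Integration.integral_diff)
        also have "\<dots> = (norm v)^2 * ?U"
          unfolding meanS by (simp add: power2_norm_eq_inner algebra_simps)
        finally show ?thesis by simp
      qed
      also have "\<dots> \<le> integral\<^sup>L ?M ?f"
        by (rule integral_mono[OF intr intf pw])
      finally have le: "(norm v)^2 * ?U \<le> integral\<^sup>L ?M ?f" .
      have "transport_cost ?M S' = ennreal (integral\<^sup>L ?M ?f)"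
        unfolding transport_cost_def by (rule nn_int_eq[OF intf]) simp
      thus ?thesis unfolding costT using le by (simp add: ennreal_leI)
    qed
  qed
qed

lemma ot_compose:
  fixes S :: "real^'n^'n"
  assumes spd: "sym_pos_def_matrix S"
  shows "is_ot_map (gaussian (m0 + v) S) (gaussian mp S) T \<longleftrightarrow>
         is_ot_map (gaussian m0 S) (gaussian mp S) (T \<circ> (\<lambda>x. x + v))"
proof -
  let ?M = "gaussian m0 S" and ?Mt = "gaussian (m0 + v) S" and ?P = "gaussian mp S"
  let ?phi = "\<lambda>x::real^'n. x + v"
  interpret fm: finite_measure ?M by (rule gaussian_finite[OF spd])
  let ?U = "measure ?M UNIV"
  define cA where "cA U = (\<integral>\<^sup>+x. ennreal ((norm (x + v - U x))^2) \<partial>?M)" for U :: "real^'n \<Rightarrow> real^'n"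
  define K where "K = 2 * (v \<bullet> (integral\<^sup>L ?M (\<lambda>x. x) - integral\<^sup>L ?P (\<lambda>y. y))) + (norm v)^2 * ?U"
  have intid: "integrable ?M (\<lambda>x. x)" by (rule gaussian_integrable[OF spd])
  have phil: "?phi \<in> measurable ?M lborel" by simp
  have rep: "(integrable ?M (\<lambda>x. (norm (x - U x))^2) \<longleftrightarrow> integrable ?M (\<lambda>x. (norm (x + v - U x))^2)) \<and>
     (integrable ?M (\<lambda>x. (norm (x - U x))^2) \<longrightarrow>
        (\<integral>x. (norm (x + v - U x))^2 \<partial>?M) = (\<integral>x. (norm (x - U x))^2 \<partial>?M) + K)"
    if Um: "U \<in> borel_measurable borel" and dU: "distr ?M lborel U = ?P" for U
  proof -
    have Ul: "U \<in> measurable ?M lborel" using Um by simp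
    have "integrable (distr ?M lborel U) (\<lambda>y. y)"
      unfolding dU by (rule gaussian_integrable[OF spd])
    hence intU: "integrable ?M U"
      by (subst (asm) integrable_distr_eq[OF Ul]) auto
    have meanU: "integral\<^sup>L ?M U = integral\<^sup>L ?P (\<lambda>y. y)"
      unfolding dU[symmetric] by (rule integral_distr[symmetric]) (use Ul in auto)
    let ?h = "\<lambda>x. 2 * (v \<bullet> (x - U x)) + (norm v)^2"
    have inth: "integrable ?M ?h" using intid intU by simp
    have inth_val: "integral\<^sup>L ?M ?h = K"
      using intid intU unfolding K_def meanU[symmetric]
      by (simp add: Bochner_Integration.integral_diff)
    have pw: "(norm (x + v - U x))^2 = (norm (x - U x))^2 + ?h x" for x
      using norm_add_sq[of "x - U x" v] by (simp add: algebra_simps)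
    have e1: "(\<lambda>x. (norm (x + v - U x))^2) = (\<lambda>x. (norm (x - U x))^2 + ?h x)"
      using pw by (simp add: fun_eq_iff)
    have e2: "(\<lambda>x. (norm (x - U x))^2) = (\<lambda>x. (norm (x + v - U x))^2 - ?h x)"
      using pw by (simp add: fun_eq_iff)
    show ?thesis
    proof (intro conjI impI iffI)
      assume i: "integrable ?M (\<lambda>x. (norm (x - U x))^2)"
      show "integrable ?M (\<lambda>x. (norm (x + v - U x))^2)"
        unfolding e1 by (rule Bochner_Integration.integrable_add[OF i inth])
    next
      assume i: "integrable ?M (\<lambda>x. (norm (x + v - U x))^2)"
      show "integrable ?M (\<lambda>x. (norm (x - U x))^2)"
        unfolding e2 by (rule Bochner_Integration.integrable_diff[OF i inth])
    next
      assume i: "integrable ?M (\<lambda>x. (norm (x - U x))^2)"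
      show "(\<integral>x. (norm (x + v - U x))^2 \<partial>?M) = (\<integral>x. (norm (x - U x))^2 \<partial>?M) + K"
        unfolding e1 inth_val[symmetric] by (rule Bochner_Integration.integral_add[OF i inth])
    qed
  qed
  have cB_eq: "transport_cost ?M U = (if integrable ?M (\<lambda>x. (norm (x - U x))^2)
        then ennreal (\<integral>x. (norm (x - U x))^2 \<partial>?M) else \<infinity>)"
    if Um: "U \<in> borel_measurable borel" for U
  proof (cases "integrable ?M (\<lambda>x. (norm (x - U x))^2)")
    case True thus ?thesis unfolding transport_cost_def using nn_int_eq[OF True] by simp
  next
    case False
    hence "\<not> transport_cost ?M U < \<infinity>" unfolding transport_cost_def
      using nn_fin_int[of "\<lambda>x. (norm (x - U x))^2" ?M] Um by simp
    thus ?thesis using False by (simp add: less_top[symmetric])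
  qed
  have cA_eq: "cA U = (if integrable ?M (\<lambda>x. (norm (x + v - U x))^2)
        then ennreal (\<integral>x. (norm (x + v - U x))^2 \<partial>?M) else \<infinity>)"
    if Um: "U \<in> borel_measurable borel" for U
  proof (cases "integrable ?M (\<lambda>x. (norm (x + v - U x))^2)")
    case True thus ?thesis unfolding cA_def using nn_int_eq[OF True] by simp
  next
    case False
    hence "\<not> cA U < \<infinity>" unfolding cA_def
      using nn_fin_int[of "\<lambda>x. (norm (x + v - U x))^2" ?M] Um by simp
    thus ?thesis using False by (simp add: less_top[symmetric])
  qed
  have key: "cA W \<le> cA U \<longleftrightarrow> transport_cost ?M W \<le> transport_cost ?M U"
    if W: "W \<in> borel_measurable borel" "distr ?M lborel W = ?P"
    and U: "U \<in> borel_measurable borel" "distr ?M lborel U = ?P" for U W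
  proof -
    note rW = rep[OF W] and rU = rep[OF U]
    define bW where "bW = (\<integral>x. (norm (x - W x))^2 \<partial>?M)"
    define bU where "bU = (\<integral>x. (norm (x - U x))^2 \<partial>?M)"
    have nnU: "0 \<le> bU" unfolding bU_def by simp
    have nnU': "0 \<le> (\<integral>x. (norm (x + v - U x))^2 \<partial>?M)" by simp
    have A1: "cA W = (if integrable ?M (\<lambda>x. (norm (x - W x))^2) then ennreal (bW + K) else \<infinity>)"
      using cA_eq[OF W(1)] rW unfolding bW_def by auto
    have A2: "cA U = (if integrable ?M (\<lambda>x. (norm (x - U x))^2) then ennreal (bU + K) else \<infinity>)"
      using cA_eq[OF U(1)] rU unfolding bU_def by auto
    have B1: "transport_cost ?M W = (if integrable ?M (\<lambda>x. (norm (x - W x))^2) then ennreal bW else \<infinity>)"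
      using cB_eq[OF W(1)] unfolding bW_def by auto
    have B2: "transport_cost ?M U = (if integrable ?M (\<lambda>x. (norm (x - U x))^2) then ennreal bU else \<infinity>)"
      using cB_eq[OF U(1)] unfolding bU_def by auto
    show ?thesis
    proof (cases "integrable ?M (\<lambda>x. (norm (x - U x))^2)")
      case iU: True
      have "(\<integral>x. (norm (x + v - U x))^2 \<partial>?M) = bU + K" using rU iU unfolding bU_def by blast
      hence nnUK: "0 \<le> bU + K" using nnU' by linarith
      show ?thesis
      proof (cases "integrable ?M (\<lambda>x. (norm (x - W x))^2)")
        case iW: True
        have "cA W \<le> cA U \<longleftrightarrow> bW + K \<le> bU + K"
          unfolding A1 A2 using iW iU ennreal_le_iff[OF nnUK] by simp
        moreover have "transport_cost ?M W \<le> transport_cost ?M U \<longleftrightarrow> bW \<le> bU"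
          unfolding B1 B2 using iW iU ennreal_le_iff[OF nnU] by simp
        ultimately show ?thesis by simp
      next
        case iW: False
        show ?thesis unfolding A1 A2 B1 B2 using iW iU by (simp add: top_unique)
      qed
    next
      case iU: False
      show ?thesis unfolding A2 B2 using iU by simp
    qed
  qed
  have costt: "transport_cost ?Mt S' = cA (S' \<circ> ?phi)" if "S' \<in> borel_measurable borel" for S'
  proof -
    have [measurable]: "S' \<in> borel_measurable borel" by (rule that)
    have "transport_cost ?Mt S' = (\<integral>\<^sup>+y. ennreal ((norm (y - S' y))^2) \<partial>distr ?M lborel ?phi)"
      unfolding transport_cost_def gaussian_shift ..
    also have "\<dots> = cA (S' \<circ> ?phi)" unfolding cA_def
      by (subst nn_integral_distr) (auto simp: o_def)
    finally show ?thesis .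
  qed
  have meas_iff: "T \<circ> ?phi \<in> borel_measurable borel \<longleftrightarrow> T \<in> borel_measurable borel" for T :: "real^'n \<Rightarrow> real^'n"
  proof
    assume a: "T \<circ> ?phi \<in> borel_measurable borel"
    have "(T \<circ> ?phi) \<circ> (\<lambda>x. x + (- v)) \<in> borel_measurable borel"
      by (rule measurable_comp[OF meas_plus a])
    moreover have "(T \<circ> ?phi) \<circ> (\<lambda>x. x + (- v)) = T" by (simp add: fun_eq_iff o_def)
    ultimately show "T \<in> borel_measurable borel" by simp
  next
    assume "T \<in> borel_measurable borel"
    thus "T \<circ> ?phi \<in> borel_measurable borel" by (rule measurable_comp[OF meas_plus])
  qed
  have distr_eq: "distr ?M lborel (T \<circ> ?phi) = distr ?Mt lborel T" if "T \<in> borel_measurable borel" for T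
  proof -
    have "distr ?Mt lborel T = distr (distr ?M lborel ?phi) lborel T" unfolding gaussian_shift ..
    also have "\<dots> = distr ?M lborel (T \<circ> ?phi)"
      by (rule distr_distr) (use that in auto)
    finally show ?thesis by simp
  qed
  show ?thesis
  proof (cases "T \<in> borel_measurable borel")
    case False
    thus ?thesis unfolding is_ot_map_def using meas_iff[of T] by simp
  next
    case Tm: True
    show ?thesis
    proof (cases "distr ?Mt lborel T = ?P")
      case False
      thus ?thesis unfolding is_ot_map_def using distr_eq[OF Tm] by simp
    next
      case dT: True
      have Tphi: "T \<circ> ?phi \<in> borel_measurable borel" using meas_iff Tm by blast
      have dTphi: "distr ?M lborel (T \<circ> ?phi) = ?P" using distr_eq[OF Tm] dT by simp
      have "(\<forall>S'. S' \<in> borel_measurable ?Mt \<and> distr ?Mt lborel S' = ?P \<longrightarrow> transport_cost ?Mt T \<le> transport_cost ?Mt S')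
          \<longleftrightarrow> (\<forall>U. U \<in> borel_measurable ?M \<and> distr ?M lborel U = ?P \<longrightarrow> transport_cost ?M (T \<circ> ?phi) \<le> transport_cost ?M U)"
      proof (intro iffI allI impI)
        fix U assume A: "\<forall>S'. S' \<in> borel_measurable ?Mt \<and> distr ?Mt lborel S' = ?P \<longrightarrow> transport_cost ?Mt T \<le> transport_cost ?Mt S'"
          and U: "U \<in> borel_measurable ?M \<and> distr ?M lborel U = ?P"
        have Um: "U \<in> borel_measurable borel" using U by simp
        define S' where "S' = U \<circ> (\<lambda>x. x + (- v))"
        have S'phi: "S' \<circ> ?phi = U" by (simp add: S'_def fun_eq_iff o_def)
        have S'm: "S' \<in> borel_measurable borel" unfolding S'_def by (rule measurable_comp[OF meas_plus Um])
        have "distr ?Mt lborel S' = ?P" using distr_eq[OF S'm] S'phi U by simp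
        hence "transport_cost ?Mt T \<le> transport_cost ?Mt S'" using A S'm by simp
        hence "cA (T \<circ> ?phi) \<le> cA U" using costt[OF Tm] costt[OF S'm] S'phi by simp
        thus "transport_cost ?M (T \<circ> ?phi) \<le> transport_cost ?M U"
          using key[OF Tphi dTphi Um] U by simp
      next
        fix S' assume B: "\<forall>U. U \<in> borel_measurable ?M \<and> distr ?M lborel U = ?P \<longrightarrow> transport_cost ?M (T \<circ> ?phi) \<le> transport_cost ?M U"
          and S': "S' \<in> borel_measurable ?Mt \<and> distr ?Mt lborel S' = ?P"
        have S'm: "S' \<in> borel_measurable borel" using S' by simp
        have Um: "S' \<circ> ?phi \<in> borel_measurable borel" using meas_iff S'm by blast
        have dU: "distr ?M lborel (S' \<circ> ?phi) = ?P" using distr_eq[OF S'm] S' by simp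
        have "transport_cost ?M (T \<circ> ?phi) \<le> transport_cost ?M (S' \<circ> ?phi)" using B Um dU by simp
        hence "cA (T \<circ> ?phi) \<le> cA (S' \<circ> ?phi)" using key[OF Tphi dTphi Um dU] by simp
        thus "transport_cost ?Mt T \<le> transport_cost ?Mt S'" using costt[OF Tm] costt[OF S'm] by simp
      qed
      thus ?thesis unfolding is_ot_map_def using Tm Tphi dT dTphi by simp
    qed
  qed
qed

theorem mainTheorem5:
  fixes \<Sigma> :: "real^'n^'n" and m0 m\<pi> :: "real^'n" and w0 L :: real
    and \<phi> :: "nat \<Rightarrow> real^'n \<Rightarrow> real^'n" and \<mu> :: "nat \<Rightarrow> (real^'n) measure"
  assumes "sym_pos_def_matrix \<Sigma>"
    and "w0 > 0" and "L > 0"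
    and "coin_wgd (gaussian m0 \<Sigma>) (gaussian m\<pi> \<Sigma>) w0 L \<phi> \<mu>"
  shows "\<exists>m :: nat \<Rightarrow> real^'n. m 1 = m0 \<and>
           (\<forall>t\<ge>1. \<mu> t = gaussian (m t) \<Sigma> \<and> (\<forall>x. \<phi> t x = m t + (x - m0)) \<and>
                   is_ot_map (gaussian m0 \<Sigma>) (\<mu> t) (\<phi> t) \<and>
                   (\<forall>T. is_ot_map (\<mu> t) (gaussian m\<pi> \<Sigma>) T \<longleftrightarrow>
                        is_ot_map (gaussian m0 \<Sigma>) (gaussian m\<pi> \<Sigma>) (T \<circ> \<phi> t)))"
proof -
  note spd = assms(1)
  have det: "det \<Sigma> \<noteq> 0" by (rule spd_det[OF spd])
  obtain G :: "nat \<Rightarrow> real^'n \<Rightarrow> real^'n" where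
    G1: "\<phi> 1 = id" "\<mu> 1 = gaussian m0 \<Sigma>" and
    G2: "\<forall>t\<ge>1. \<phi> t \<in> borel_measurable lborel \<and> \<mu> t = distr (gaussian m0 \<Sigma>) lborel (\<phi> t)" and
    G3: "\<forall>t\<ge>1. wgrad_KL (\<mu> t) (gaussian m\<pi> \<Sigma>) (G t)" and
    G4: "\<forall>t\<ge>2. \<forall>x. \<phi> t x =
            x - ((w0 - (\<Sum>s\<in>{1..t-1}. ((1/L) *\<^sub>R G s (\<phi> s x)) \<bullet> (\<phi> s x - x))) / (L * real t))
                  *\<^sub>R (\<Sum>s\<in>{1..t-1}. G s (\<phi> s x))"
    using assms(4) unfolding coin_wgd_def by blast
  define m where "m t = \<phi> t m0" for t
  have fun_phi: "\<phi> t = (\<lambda>x. x + (m t - m0))" if "\<forall>x. \<phi> t x = m t + (x - m0)" for t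
    using that by (auto simp: fun_eq_iff algebra_simps)
  have mu_t: "\<mu> t = gaussian (m t) \<Sigma>" if "t \<ge> 1" "\<forall>x. \<phi> t x = m t + (x - m0)" for t
  proof -
    have "\<mu> t = distr (gaussian m0 \<Sigma>) lborel (\<lambda>x. x + (m t - m0))"
      using G2 that fun_phi[OF that(2)] by simp
    also have "\<dots> = gaussian (m t) \<Sigma>" by (simp add: gaussian_shift)
    finally show ?thesis .
  qed
  have trans: "\<forall>x. \<phi> t x = m t + (x - m0)" if "t \<ge> 1" for t
    using that
  proof (induction t rule: less_induct)
    case (less t)
    show ?case
    proof (cases "t = 1")
      case True thus ?thesis using G1 by (simp add: m_def)
    next
      case False
      hence t2: "t \<ge> 2" using less.prems by simp
      have IH: "\<forall>x. \<phi> s x = m s + (x - m0)" if "s \<in> {1..t-1}" for s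
        using less.IH[of s] that t2 by auto
      have Gc: "G s y = G s z" if "s \<in> {1..t-1}" for s y z
      proof -
        have "wgrad_KL (gaussian (m s) \<Sigma>) (gaussian m\<pi> \<Sigma>) (G s)"
          using G3 that mu_t[of s] IH[OF that] by auto
        thus ?thesis by (rule gauss_wgrad[OF det])
      qed
      have e1: "G s (\<phi> s x) = G s (\<phi> s m0)" if "s \<in> {1..t-1}" for s x using Gc[OF that] .
      have e2: "\<phi> s x - x = \<phi> s m0 - m0" if "s \<in> {1..t-1}" for s x using IH[OF that] by simp
      have "\<phi> t x = x + (\<phi> t m0 - m0)" for x
      proof -
        have s1: "(\<Sum>s\<in>{1..t-1}. ((1/L) *\<^sub>R G s (\<phi> s x)) \<bullet> (\<phi> s x - x))
              = (\<Sum>s\<in>{1..t-1}. ((1/L) *\<^sub>R G s (\<phi> s m0)) \<bullet> (\<phi> s m0 - m0))"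
        proof (rule sum.cong[OF refl])
          fix s assume s: "s \<in> {1..t-1}"
          show "((1/L) *\<^sub>R G s (\<phi> s x)) \<bullet> (\<phi> s x - x) = ((1/L) *\<^sub>R G s (\<phi> s m0)) \<bullet> (\<phi> s m0 - m0)"
            using e1[OF s, of x] e2[OF s, of x] by simp
        qed
        have s2: "(\<Sum>s\<in>{1..t-1}. G s (\<phi> s x)) = (\<Sum>s\<in>{1..t-1}. G s (\<phi> s m0))"
          by (rule sum.cong[OF refl]) (rule e1)
        define C where "C = ((w0 - (\<Sum>s\<in>{1..t-1}. ((1/L) *\<^sub>R G s (\<phi> s m0)) \<bullet> (\<phi> s m0 - m0))) / (L * real t))
                  *\<^sub>R (\<Sum>s\<in>{1..t-1}. G s (\<phi> s m0))"
        have hx: "\<phi> t x = x - ((w0 - (\<Sum>s\<in>{1..t-1}. ((1/L) *\<^sub>R G s (\<phi> s x)) \<bullet> (\<phi> s x - x))) / (L * real t))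
                  *\<^sub>R (\<Sum>s\<in>{1..t-1}. G s (\<phi> s x))" using G4 t2 by blast
        have hm: "\<phi> t m0 = m0 - C" unfolding C_def using G4 t2 by blast
        have hx': "\<phi> t x = x - C" unfolding C_def using hx unfolding s1 s2 .
        show ?thesis unfolding hx' hm by (simp add: algebra_simps)
      qed
      thus ?thesis by (simp add: m_def algebra_simps)
    qed
  qed
  have main: "\<mu> t = gaussian (m t) \<Sigma> \<and> (\<forall>x. \<phi> t x = m t + (x - m0)) \<and>
                   is_ot_map (gaussian m0 \<Sigma>) (\<mu> t) (\<phi> t) \<and>
                   (\<forall>T. is_ot_map (\<mu> t) (gaussian m\<pi> \<Sigma>) T \<longleftrightarrow>
                        is_ot_map (gaussian m0 \<Sigma>) (gaussian m\<pi> \<Sigma>) (T \<circ> \<phi> t))"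
    if t: "t \<ge> 1" for t
  proof -
    note tr = trans[OF t]
    have a: "\<mu> t = gaussian (m t) \<Sigma>" by (rule mu_t[OF t tr])
    have b: "is_ot_map (gaussian m0 \<Sigma>) (\<mu> t) (\<phi> t)"
      unfolding mu_t[OF t tr] fun_phi[OF tr]
      using ot_translation[OF spd, of m0 "m t - m0"] by simp
    have c: "is_ot_map (\<mu> t) (gaussian m\<pi> \<Sigma>) T \<longleftrightarrow> is_ot_map (gaussian m0 \<Sigma>) (gaussian m\<pi> \<Sigma>) (T \<circ> \<phi> t)" for T
      unfolding mu_t[OF t tr] fun_phi[OF tr]
      using ot_compose[OF spd, of m0 "m t - m0" m\<pi> T] by simp
    show ?thesis using a b c tr by blast
  qed
  have m1: "m 1 = m0" using G1 by (simp add: m_def)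
  show ?thesis using m1 main by blast
qed

end
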